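(* Let $k\ge4$. For each $p\in\mathbb N_0(k)$, the Hammerstein equation $\int_0^1K_p(t,u;k)f^k(u)\,du=f(t)$, $t\in[0,1]$, has at least two distinct positive solutions $f\in C[0,1]$.
   Context: For integers $k\ge2$, $n\ge1$ and $x\in\mathbb R$: $P_{n,k}(x)=\left(1+\frac{x^{n-1}}{2}\right)^{k+1}-\left(1-\frac{x^{n-1}}{2}\right)^{k+1}$, and for $n>k$: $Q_{n,k}(x)=(k+1)x^{n-k}$. Fix an integer $k$ and, for each integer $n>k$, an arbitrary $\xi(k;n)\in(0,1)$ with $P_{n,k}(\xi(k;n))=Q_{n,k}(\xi(k;n))$. Let $\alpha=\limsup_{n\to\infty}\xi(k;n)^{n-1}$ and let $(n_p)_{p\in\mathbb N}$ be a strictly increasing sequence of integers $>k$ with $\xi(k;n_p)^{n_p-1}\to\alpha$. For $n>k$ put $$C_n(k)=\frac{\xi(k;n)^{3n-k-2}}{\frac{1}{k+2}\left[\left(1+\frac{\xi(k;n)^{n-1}}{2}\right)^{k+2}-\left(1-\frac{\xi(k;n)^{n-1}}{2}\right)^{k+2}\right]-\xi(k;n)^{n-k}},$$ $\gamma_p(k)=C_{n_p}(k)$, $\mathbb N_0(k)=\{p\in\mathbb N: |\gamma_p(k)|<4\}$, and for $p\in\mathbb N_0(k)$, $K_p(t,u;k)=1+\gamma_p(k)\left(t-\frac12\right)\left(u-\frac12\right)$, $t,u\in[0,1]$ (a strictly positive continuous kernel). *)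

theory Defs
  imports "HOL-Analysis.Analysis"
begin

definition P_poly :: "nat \<Rightarrow> nat \<Rightarrow> real \<Rightarrow> real" where
  "P_poly n k x = (1 + x ^ (n - 1) / 2) ^ (k + 1) - (1 - x ^ (n - 1) / 2) ^ (k + 1)"

definition Q_poly :: "nat \<Rightarrow> nat \<Rightarrow> real \<Rightarrow> real" where
  "Q_poly n k x = real (k + 1) * x ^ (n - k)"

text \<open>alpha = limsup of xi(k;n)^(n-1); xi is the chosen root function for fixed k.\<close>
definition alpha_lim :: "(nat \<Rightarrow> real) \<Rightarrow> real" where
  "alpha_lim xi = real_of_ereal (limsup (\<lambda>n. ereal (xi n ^ (n - 1))))"

definition C_const :: "nat \<Rightarrow> (nat \<Rightarrow> real) \<Rightarrow> nat \<Rightarrow> real" where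
  "C_const k xi n =
     xi n ^ (3 * n - k - 2) /
     ((1 / real (k + 2)) * ((1 + xi n ^ (n - 1) / 2) ^ (k + 2) - (1 - xi n ^ (n - 1) / 2) ^ (k + 2))
       - xi n ^ (n - k))"

definition gamma_seq :: "nat \<Rightarrow> (nat \<Rightarrow> real) \<Rightarrow> (nat \<Rightarrow> nat) \<Rightarrow> nat \<Rightarrow> real" where
  "gamma_seq k xi np p = C_const k xi (np p)"

definition N0 :: "nat \<Rightarrow> (nat \<Rightarrow> real) \<Rightarrow> (nat \<Rightarrow> nat) \<Rightarrow> nat set" where
  "N0 k xi np = {p. \<bar>gamma_seq k xi np p\<bar> < 4}"

definition kernel :: "nat \<Rightarrow> (nat \<Rightarrow> real) \<Rightarrow> (nat \<Rightarrow> nat) \<Rightarrow> nat \<Rightarrow> real \<Rightarrow> real \<Rightarrow> real" where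
  "kernel k xi np p t u = 1 + gamma_seq k xi np p * (t - 1/2) * (u - 1/2)"

end

theory Submission
  imports Defs
begin

lemma ftc01:
  fixes F f :: "real \<Rightarrow> real"
  assumes "\<And>u. (F has_real_derivative f u) (at u)"
  shows "integral {0..1} f = F 1 - F 0"
proof -
  have "(f has_integral F 1 - F 0) {0..1}"
    apply (rule fundamental_theorem_of_calculus)
    using assms by (auto simp: has_real_derivative_iff_has_vector_derivative[symmetric]
        intro: has_field_derivative_at_within)
  then show ?thesis by (rule integral_unique)
qed

lemma dpow:
  fixes a b z :: real and m :: nat
  shows "((\<lambda>z. (a + b*z)^(Suc m)/(Suc m)) has_real_derivative b*(a+b*z)^m) (at z)"
proof -
  have "((\<lambda>z. (a + b*z)^(Suc m)/(Suc m)) has_real_derivative (Suc m) * (a+b*z)^m * b / (Suc m)) (at z)"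
    by (intro derivative_eq_intros refl) auto
  then show ?thesis by (simp add: field_simps del: of_nat_Suc)
qed

lemma alg: fixes X A1 A2 B1 B2 c1 c2 y G :: real shows
 "X*(A1/c1/y + G*(A2/c2 - A1/c1)/y^2) - X*(B1/c1/y + G*(B2/c2 - B1/c1)/y^2) = X*((A1-B1)/c1/y + G*((A2-B2)/c2 - (A1-B1)/c1)/y^2)"
  by (simp add: algebra_simps diff_divide_distrib add_divide_distrib)

lemma quadd: "((\<lambda>u. u + c * (u^2/2 - u/2)) has_real_derivative 1 + c * (u - 1/2)) (at u)"
  by (auto intro!: derivative_eq_intros simp: algebra_simps)

lemma D_pos:
  fixes d :: real and k :: nat
  assumes "0 < d" "k \<ge> 1"
  shows "(1+d)^(k+2)/(k+2) - (1+d)^(k+1)/(k+1) - ((1-d)^(k+2)/(k+2) - (1-d)^(k+1)/(k+1)) > 0"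
proof -
  define \<phi> where "\<phi> = (\<lambda>d::real. (1+1*d)^(Suc (Suc k))/(Suc (Suc k)) - (1+1*d)^(Suc k)/(Suc k)
      - ((1+(-1)*d)^(Suc (Suc k))/(Suc (Suc k)) - (1+(-1)*d)^(Suc k)/(Suc k)))"
  have der: "(\<phi> has_real_derivative c * ((1+c)^k - (1-c)^k)) (at c)" for c
  proof -
    have "(\<phi> has_real_derivative (1*(1+1*c)^(Suc k) - 1*(1+1*c)^k)
         - ((-1)*(1+(-1)*c)^(Suc k) - (-1)*(1+(-1)*c)^k)) (at c)"
      unfolding \<phi>_def
      by (intro DERIV_diff dpow)
    then show ?thesis by (simp add: algebra_simps)
  qed
  have "\<phi> 0 < \<phi> d"
  proof (rule DERIV_pos_imp_increasing_open[OF assms(1)])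
    show "continuous_on {0..d} \<phi>"
      using der by (meson DERIV_isCont continuous_at_imp_continuous_on)
  next
    fix c assume "0 < c" "c < d"
    have "(1-c)^k < (1+c)^k"
    proof (cases "c \<le> 1")
      case True
      then show ?thesis using \<open>0<c\<close> assms by (intro power_strict_mono) auto
    next
      case False
      have "\<bar>1-c\<bar> < 1 + c" using \<open>0<c\<close> by auto
      then have "\<bar>1-c\<bar>^k < (1+c)^k" using assms by (intro power_strict_mono) auto
      moreover have "(1-c)^k \<le> \<bar>1-c\<bar>^k" by (metis abs_ge_self power_abs)
      ultimately show ?thesis by linarith
    qed
    then show "\<exists>y. DERIV \<phi> c :> y \<and> 0 < y" using der[of c] \<open>0<c\<close>
      by (intro exI[of _ "c * ((1+c)^k - (1-c)^k)"]) auto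
  qed
  moreover have "\<phi> 0 = 0" by (simp add: \<phi>_def)
  ultimately show ?thesis by (simp add: \<phi>_def add.commute)
qed

theorem theorem5p8:
  fixes k :: nat and xi :: "nat \<Rightarrow> real" and np :: "nat \<Rightarrow> nat" and p :: nat
  assumes "k \<ge> 4"
    and "\<forall>n>k. 0 < xi n \<and> xi n < 1 \<and> P_poly n k (xi n) = Q_poly n k (xi n)"
    and "strict_mono np" and "\<forall>q. np q > k"
    and "(\<lambda>q. xi (np q) ^ (np q - 1)) \<longlonglongrightarrow> alpha_lim xi"
    and "p \<in> N0 k xi np"
  shows "\<exists>f g :: real \<Rightarrow> real.
           continuous_on {0..1} f \<and> continuous_on {0..1} g \<and>
           (\<forall>t\<in>{0..1}. f t > 0) \<and> (\<forall>t\<in>{0..1}. g t > 0) \<and>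
           (\<forall>t\<in>{0..1}. integral {0..1} (\<lambda>u. kernel k xi np p t u * f u ^ k) = f t) \<and>
           (\<forall>t\<in>{0..1}. integral {0..1} (\<lambda>u. kernel k xi np p t u * g u ^ k) = g t) \<and>
           (\<exists>t\<in>{0..1}. f t \<noteq> g t)"
proof -
  define n where "n = np p"
  define x where "x = xi n"
  define y where "y = x ^ (n - 1)"
  define \<gamma> where "\<gamma> = gamma_seq k xi np p"
  define a where "a = 1 + y/2"
  define b where "b = 1 - y/2"
  define D where "D = (1 / real (k + 2)) * (a ^ (k + 2) - b ^ (k + 2)) - x ^ (n - k)"
  have nk: "n > k" using assms(4) n_def by auto
  have x: "0 < x" "x < 1" and PQ: "P_poly n k x = Q_poly n k x"
    using assms(2) nk unfolding x_def by auto
  have nm: "n - 1 = Suc (n - 2)" using nk assms(1) by simp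
  have y: "0 < y" "y < 1" unfolding y_def using x
    using power_Suc_less_one[OF x, of "n-2"] by (simp_all only: nm, auto)
  have PQ': "a^(k+1) - b^(k+1) = (k+1) * x^(n-k)"
    using PQ unfolding P_poly_def Q_poly_def a_def b_def y_def by simp
  have Dpos: "D > 0"
  proof -
    have "(1+y/2)^(k+2)/(k+2) - (1+y/2)^(k+1)/(k+1) - ((1-y/2)^(k+2)/(k+2) - (1-y/2)^(k+1)/(k+1)) > 0"
      using y assms(1) by (intro D_pos) auto
    then have "a^(k+2)/(k+2) - a^(k+1)/(k+1) - (b^(k+2)/(k+2) - b^(k+1)/(k+1)) > 0"
      unfolding a_def b_def by simp
    moreover have "D = a^(k+2)/(k+2) - a^(k+1)/(k+1) - (b^(k+2)/(k+2) - b^(k+1)/(k+1))"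
    proof -
      have "x^(n-k) = (a^(k+1) - b^(k+1))/(k+1)" using PQ' by (simp add: field_simps)
      then show ?thesis unfolding D_def by (simp add: diff_divide_distrib)
    qed
    ultimately show ?thesis by simp
  qed
  have \<gamma>: "\<gamma> = x ^ (3*n-k-2) / D"
    unfolding \<gamma>_def gamma_seq_def C_const_def D_def a_def b_def y_def x_def n_def by simp
  have ker: "kernel k xi np p t u = 1 + \<gamma> * (t - 1/2) * (u - 1/2)" for t u
    unfolding kernel_def \<gamma>_def by simp
  have xn: "x^k * x^(n-k) = x * y"
  proof -
    have "x^k * x^(n-k) = x^(k + (n-k))" by (simp add: power_add)
    also have "k + (n-k) = 1 + (n-1)" using nk by simp
    finally show ?thesis unfolding y_def by (simp only: power_add power_one_right)
  qed
  have x3n: "x^k * x^(3*n-k-2) = x * y^3"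
  proof -
    have "x^k * x^(3*n-k-2) = x^(k + (3*n-k-2))" by (simp add: power_add)
    also have "k + (3*n-k-2) = 1 + (n-1)*3" using nk by simp
    finally show ?thesis unfolding y_def by (simp only: power_add power_one_right power_mult)
  qed
  define f :: "real \<Rightarrow> real" where "f = (\<lambda>_. 1)"
  define g :: "real \<Rightarrow> real" where "g = (\<lambda>u. x * (1 + y * (u - 1/2)))"
  have gpos: "g t > 0" if "t \<in> {0..1}" for t
  proof -
    have "y*(t-1/2) \<ge> y*(-1/2)" using y that by (intro mult_left_mono) auto
    then have "1 + y * (t - 1/2) > 0" using y by linarith
    then show ?thesis unfolding g_def using x by simp
  qed
  have fint: "integral {0..1} (\<lambda>u. kernel k xi np p t u * f u ^ k) = f t" for t
  proof -
    have "integral {0..1} (\<lambda>u. kernel k xi np p t u * f u ^ k)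
        = (\<lambda>u. u + \<gamma> * (t - 1/2) * (u^2/2 - u/2)) 1 - (\<lambda>u. u + \<gamma> * (t - 1/2) * (u^2/2 - u/2)) 0"
    proof (rule ftc01)
      fix u :: real
      have "((\<lambda>u. u + \<gamma> * (t - 1/2) * (u^2/2 - u/2)) has_real_derivative
             1 + (\<gamma> * (t - 1/2)) * (u - 1/2)) (at u)"
        by (rule quadd)
      then show "((\<lambda>u. u + \<gamma> * (t - 1/2) * (u^2/2 - u/2)) has_real_derivative
             kernel k xi np p t u * f u ^ k) (at u)"
        unfolding ker f_def by (simp add: field_simps)
    qed
    then show ?thesis unfolding f_def by simp
  qed
  define F where "F = (\<lambda>t u. x^k * ((b + y*u)^(Suc k)/(Suc k) / y
      + \<gamma> * (t - 1/2) * ((b + y*u)^(Suc (Suc k))/(Suc (Suc k)) - (b + y*u)^(Suc k)/(Suc k)) / y^2))"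
  have gint: "integral {0..1} (\<lambda>u. kernel k xi np p t u * g u ^ k) = g t" for t
  proof -
    have "integral {0..1} (\<lambda>u. kernel k xi np p t u * g u ^ k) = F t 1 - F t 0"
    proof (rule ftc01)
      fix u :: real
      have "(F t has_real_derivative x^k * (y * (b + y*u)^k / y
          + \<gamma> * (t - 1/2) * (y * (b + y*u)^(Suc k) - y * (b + y*u)^k) / y^2)) (at u)"
        unfolding F_def
        by (intro dpow DERIV_cmult DERIV_add DERIV_cdivide DERIV_diff) 
      moreover have "x^k * (y * (b + y*u)^k / y
          + \<gamma> * (t - 1/2) * (y * (b + y*u)^(Suc k) - y * (b + y*u)^k) / y^2)
          = kernel k xi np p t u * g u ^ k"
      proof -
        define W where "W = b + y*u"
        have W1: "W - 1 = y*(u - 1/2)" unfolding W_def b_def by (simp add: algebra_simps)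
        have gW: "g u = x * W" unfolding g_def W_def b_def by (simp add: algebra_simps)
        have "y * W^(Suc k) - y * W^k = y * W^k * (W - 1)" by (simp add: algebra_simps)
        also have "\<dots> = y * y * W^k * (u - 1/2)" unfolding W1 by (simp add: algebra_simps)
        finally have e: "y * W^(Suc k) - y * W^k = y * y * W^k * (u - 1/2)" .
        show ?thesis unfolding ker gW power_mult_distrib W_def[symmetric] e using y
          by (simp add: field_simps power2_eq_square)
      qed
      ultimately show "(F t has_real_derivative kernel k xi np p t u * g u ^ k) (at u)" by simp
    qed
    also have "\<dots> = x^k * ((a^Suc k - b^Suc k)/real (Suc k) / y
         + \<gamma> * (t - 1/2) * ((a^Suc (Suc k) - b^Suc (Suc k))/real (Suc (Suc k)) - (a^Suc k - b^Suc k)/real (Suc k)) / y^2)"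
    proof -
      have ab: "b + y * 1 = a" "b + y * 0 = b" unfolding a_def b_def by simp_all
      show ?thesis unfolding F_def ab by (rule alg)
    qed
    also have "\<dots> = x^k * (x^(n-k) / y + (t - 1/2) * (\<gamma> * D) / y^2)"
    proof -
      have e1: "(a^(k+1) - b^(k+1))/(k+1) = x^(n-k)" using PQ' by (simp add: field_simps)
      have e2: "(a^Suc (Suc k) - b^Suc (Suc k))/real (Suc (Suc k)) = (1 / real (k + 2)) * (a ^ (k + 2) - b ^ (k + 2))"
        by (simp add: numeral_2_eq_2)
      have e1': "(a^Suc k - b^Suc k)/real (Suc k) = x^(n-k)" using e1 by simp
      show ?thesis unfolding e1' e2 D_def by (simp add: algebra_simps)
    qed
    also have "\<gamma> * D = x^(3*n-k-2)" unfolding \<gamma> using Dpos by simp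
    also have "x^k * (x^(n-k) / y + (t - 1/2) * x^(3*n-k-2) / y^2)
       = (x^k * x^(n-k)) / y + (t - 1/2) * (x^k * x^(3*n-k-2)) / y^2"
      by (simp add: algebra_simps)
    also have "\<dots> = g t" unfolding xn x3n g_def using y by (simp add: field_simps power2_eq_square power3_eq_cube)
    finally show ?thesis .
  qed
  have neq: "f 0 \<noteq> g 0"
  proof -
    have "g 0 = x * (1 - y/2)" unfolding g_def by simp
    also have "\<dots> < 1 * 1" using x y by (intro mult_strict_mono) auto
    finally show ?thesis unfolding f_def by simp
  qed
  have cf: "continuous_on {0..1} f" unfolding f_def by (rule continuous_on_const)
  have cg: "continuous_on {0..1} g" unfolding g_def by (intro continuous_intros)
  have fp: "\<forall>t\<in>{0..1}. f t > 0" unfolding f_def by simp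
  have z: "(0::real) \<in> {0..1}" by simp
  show ?thesis
    apply (rule exI[of _ f], rule exI[of _ g])
    using cf cg fp gpos fint gint neq z by blast
qed

end
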